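(* Let $M$ and $M'$ be two stable matchings in an instance $I$ of SPA-S, and let $M^\lor$ be the assignment defined from $M,M'$ in the context. Then $M^\lor$ is a matching.
   Context: An instance $I$ of SPA-S consists of a finite set $\mathcal{S}$ of students, a finite set $\mathcal{P}$ of projects and a finite set $\mathcal{L}$ of lecturers. Each student $s_i$ ranks a subset $A_i\subseteq\mathcal{P}$ (its acceptable projects) in strict order. Each project is offered by exactly one lecturer; lecturer $l_k$ offers a nonempty set $P_k\subseteq\mathcal{P}$, the $P_k$ partitioning $\mathcal{P}$. Each lecturer $l_k$ ranks in strict order the students who find at least one project of $P_k$ acceptable. Projects have capacities $c_j\in\mathbb{Z}^+$, lecturers have capacities $d_k\in\mathbb{Z}^+$ with $\max\{c_j:p_j\in P_k\}\le d_k\le\sum\{c_j:p_j\in P_k\}$. A pair $(s_i,p_j)$, $p_j$ offered by $l_k$, is acceptable if $p_j\in A_i$ and $s_i$ is on $l_k$'s list. A matching $M$ is a set of acceptable pairs with each student in at most one pair, $|M(p_j)|\le c_j$, $|M(l_k)|\le d_k$, where for an assignment $M$ (a set of acceptable pairs), $M(s_i)$, $M(p_j)$, $M(l_k)$ denote the project of $s_i$, the students assigned to $p_j$, and the students assigned to projects of $l_k$. Undersubscribed/full means fewer than/exactly capacity many assigned students. An acceptable pair $(s_i,p_j)\notin M$ ($p_j$ offered by $l_k$) blocks $M$ if ($s_i$ is unassigned or prefers $p_j$ to $M(s_i)$) and one of: (P1) $p_j$ and $l_k$ undersubscribed; (P2) $p_j$ undersubscribed, $l_k$ full, $s_i\in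 M(l_k)$; (P3) $p_j$ undersubscribed, $l_k$ full, $l_k$ prefers $s_i$ to the worst student of $M(l_k)$; (P4) $p_j$ full and $l_k$ prefers $s_i$ to the worst student of $M(p_j)$. $M$ is stable if it has no blocking pair. Given stable matchings $M,M'$, $M^\lor$ is the assignment in which each student unassigned in both $M$ and $M'$ is unassigned, each student assigned to the same project in both is assigned to that project, and every other student is assigned to the worse (in her preference) of her projects in $M$ and $M'$. *)

theory Defs
  imports Main
begin

record ('s,'p,'l) spa =
  studs :: "'s set"
  projs :: "'p set"
  lecs :: "'l set"
  accp :: "'s \<Rightarrow> 'p set"
  sprf :: "'s \<Rightarrow> 'p \<Rightarrow> 'p \<Rightarrow> bool"       (* sprf I s p q: s prefers p to q *)
  offerer :: "'p \<Rightarrow> 'l"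
  lprf :: "'l \<Rightarrow> 's \<Rightarrow> 's \<Rightarrow> bool"       (* lprf I l s t: l prefers s to t *)
  pcap :: "'p \<Rightarrow> nat"
  lcap :: "'l \<Rightarrow> nat"

definition strict_order_on :: "'a set \<Rightarrow> ('a \<Rightarrow> 'a \<Rightarrow> bool) \<Rightarrow> bool" where
  "strict_order_on X R \<longleftrightarrow>
     (\<forall>x. \<not> R x x) \<and> (\<forall>x y z. R x y \<longrightarrow> R y z \<longrightarrow> R x z) \<and>
     (\<forall>x\<in>X. \<forall>y\<in>X. x \<noteq> y \<longrightarrow> R x y \<or> R y x) \<and> (\<forall>x y. R x y \<longrightarrow> x \<in> X \<and> y \<in> X)"

definition offered :: "('s,'p,'l) spa \<Rightarrow> 'l \<Rightarrow> 'p set" where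
  "offered I l = {p \<in> projs I. offerer I p = l}"

definition lec_list :: "('s,'p,'l) spa \<Rightarrow> 'l \<Rightarrow> 's set" where
  "lec_list I l = {s \<in> studs I. accp I s \<inter> offered I l \<noteq> {}}"

definition valid_spa :: "('s,'p,'l) spa \<Rightarrow> bool" where
  "valid_spa I \<longleftrightarrow>
     finite (studs I) \<and> finite (projs I) \<and> finite (lecs I) \<and>
     (\<forall>s\<in>studs I. accp I s \<subseteq> projs I \<and> strict_order_on (accp I s) (sprf I s)) \<and>
     (\<forall>p\<in>projs I. offerer I p \<in> lecs I \<and> pcap I p \<ge> 1) \<and>
     (\<forall>l\<in>lecs I. offered I l \<noteq> {} \<and> strict_order_on (lec_list I l) (lprf I l) \<and>
        Max (pcap I ` offered I l) \<le> lcap I l \<and> lcap I l \<le> sum (pcap I) (offered I l))"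

definition acceptable :: "('s,'p,'l) spa \<Rightarrow> 's \<Rightarrow> 'p \<Rightarrow> bool" where
  "acceptable I s p \<longleftrightarrow> s \<in> studs I \<and> p \<in> accp I s \<and> s \<in> lec_list I (offerer I p)"

definition Mp :: "('s \<times> 'p) set \<Rightarrow> 'p \<Rightarrow> 's set" where
  "Mp M p = {s. (s,p) \<in> M}"

definition Ml :: "('s,'p,'l) spa \<Rightarrow> ('s \<times> 'p) set \<Rightarrow> 'l \<Rightarrow> 's set" where
  "Ml I M l = {s. \<exists>p. (s,p) \<in> M \<and> offerer I p = l}"

definition is_matching :: "('s,'p,'l) spa \<Rightarrow> ('s \<times> 'p) set \<Rightarrow> bool" where
  "is_matching I M \<longleftrightarrow>
     (\<forall>(s,p)\<in>M. acceptable I s p) \<and>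
     (\<forall>s p q. (s,p) \<in> M \<longrightarrow> (s,q) \<in> M \<longrightarrow> p = q) \<and>
     (\<forall>p\<in>projs I. card (Mp M p) \<le> pcap I p) \<and>
     (\<forall>l\<in>lecs I. card (Ml I M l) \<le> lcap I l)"

definition worst :: "('s,'p,'l) spa \<Rightarrow> 'l \<Rightarrow> 's set \<Rightarrow> 's" where
  "worst I l X = (THE t. t \<in> X \<and> (\<forall>u\<in>X. u \<noteq> t \<longrightarrow> lprf I l u t))"

definition blocks :: "('s,'p,'l) spa \<Rightarrow> ('s \<times> 'p) set \<Rightarrow> 's \<Rightarrow> 'p \<Rightarrow> bool" where
  "blocks I M s p \<longleftrightarrow>
     acceptable I s p \<and> (s,p) \<notin> M \<and>
     ((\<forall>q. (s,q) \<notin> M) \<or> (\<exists>q. (s,q) \<in> M \<and> sprf I s p q)) \<and>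
     (let l = offerer I p in
        (card (Mp M p) < pcap I p \<and> card (Ml I M l) < lcap I l) \<or>
        (card (Mp M p) < pcap I p \<and> card (Ml I M l) = lcap I l \<and> s \<in> Ml I M l) \<or>
        (card (Mp M p) < pcap I p \<and> card (Ml I M l) = lcap I l \<and>
           lprf I l s (worst I l (Ml I M l))) \<or>
        (card (Mp M p) = pcap I p \<and> lprf I l s (worst I l (Mp M p))))"

definition stable :: "('s,'p,'l) spa \<Rightarrow> ('s \<times> 'p) set \<Rightarrow> bool" where
  "stable I M \<longleftrightarrow> is_matching I M \<and> \<not> (\<exists>s p. blocks I M s p)"

definition join :: "('s,'p,'l) spa \<Rightarrow> ('s \<times> 'p) set \<Rightarrow> ('s \<times> 'p) set \<Rightarrow> ('s \<times> 'p) set" where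
  "join I M M' =
     {(s,p). (s,p) \<in> M \<and> (s,p) \<in> M'} \<union>
     {(s,p). (s,p) \<in> M \<and> (\<exists>q. (s,q) \<in> M' \<and> sprf I s q p)} \<union>
     {(s,p). (s,p) \<in> M' \<and> (\<exists>q. (s,q) \<in> M \<and> sprf I s q p)}"

end

theory Submission
  imports Defs
begin

lemma so_irrefl: "strict_order_on Y R \<Longrightarrow> \<not> R x x"
  unfolding strict_order_on_def by blast

lemma so_trans: "strict_order_on Y R \<Longrightarrow> R x y \<Longrightarrow> R y z \<Longrightarrow> R x z"
  unfolding strict_order_on_def by blast

lemma so_total: "strict_order_on Y R \<Longrightarrow> x \<in> Y \<Longrightarrow> y \<in> Y \<Longrightarrow> x \<noteq> y \<Longrightarrow> R x y \<or> R y x"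
  unfolding strict_order_on_def by blast

lemma worst_ex:
  assumes R: "strict_order_on Y R" and fin: "finite Z" and ne: "Z \<noteq> {}" and sub: "Z \<subseteq> Y"
  shows "\<exists>t. t \<in> Z \<and> (\<forall>u\<in>Z. u \<noteq> t \<longrightarrow> R u t)"
  using fin ne sub
proof (induction Z rule: finite_ne_induct)
  case (singleton x) then show ?case by auto
next
  case (insert x F)
  then obtain t where t: "t \<in> F" "\<forall>u\<in>F. u \<noteq> t \<longrightarrow> R u t" by auto
  have xt: "x \<noteq> t" using insert t by auto
  have "R x t \<or> R t x" using so_total[OF R] insert t xt by blast
  then show ?case
  proof
    assume "R x t" then show ?thesis using t by (intro exI[of _ t]) auto
  next
    assume a: "R t x"
    have "\<forall>u\<in>insert x F. u \<noteq> x \<longrightarrow> R u x"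
    proof (intro ballI impI)
      fix u assume "u \<in> insert x F" "u \<noteq> x"
      then have "u \<in> F" by auto
      then show "R u x" using t a so_trans[OF R] by (cases "u = t") auto
    qed
    then show ?thesis by auto
  qed
qed

lemma worst_prop:
  assumes R: "strict_order_on (lec_list I l) (lprf I l)" and fin: "finite Z" and ne: "Z \<noteq> {}"
    and sub: "Z \<subseteq> lec_list I l"
  shows "worst I l Z \<in> Z \<and> (\<forall>u\<in>Z. u \<noteq> worst I l Z \<longrightarrow> lprf I l u (worst I l Z))"
proof -
  obtain t where t: "t \<in> Z" "\<forall>u\<in>Z. u \<noteq> t \<longrightarrow> lprf I l u t"
    using worst_ex[OF R fin ne sub] by blast
  have uniq: "t' = t" if "t' \<in> Z" "\<forall>u\<in>Z. u \<noteq> t' \<longrightarrow> lprf I l u t'" for t'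
  proof (rule ccontr)
    assume ne: "t' \<noteq> t"
    have 1: "lprf I l t' t" using t(2) that(1) ne by blast
    have 2: "lprf I l t t'" using that(2) t(1) ne[symmetric] by blast
    have "lprf I l t t" using so_trans[OF R 2 1] .
    then show False using so_irrefl[OF R] by blast
  qed
  have "worst I l Z = t" unfolding worst_def
  proof (rule the_equality)
    show "t \<in> Z \<and> (\<forall>u\<in>Z. u \<noteq> t \<longrightarrow> lprf I l u t)" using t by blast
    show "\<And>t'. t' \<in> Z \<and> (\<forall>u\<in>Z. u \<noteq> t' \<longrightarrow> lprf I l u t') \<Longrightarrow> t' = t"
      using uniq by blast
  qed
  then show ?thesis using t by simp
qed

lemma worst_above:
  assumes R: "strict_order_on (lec_list I l) (lprf I l)" and fin: "finite Z"
    and sub: "Z \<subseteq> lec_list I l" and u: "u \<in> Z" and x: "lprf I l x u"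
  shows "lprf I l x (worst I l Z)"
proof -
  have w: "worst I l Z \<in> Z \<and> (\<forall>u\<in>Z. u \<noteq> worst I l Z \<longrightarrow> lprf I l u (worst I l Z))"
    using worst_prop[OF R fin _ sub] u by blast
  show ?thesis
  proof (cases "u = worst I l Z")
    case True then show ?thesis using x by simp
  next
    case False then show ?thesis using w u x so_trans[OF R] by blast
  qed
qed

lemma worst_below:
  assumes R: "strict_order_on (lec_list I l) (lprf I l)" and fin: "finite Z"
    and sub: "Z \<subseteq> lec_list I l" and x: "x \<in> lec_list I l" "x \<notin> Z"
    and nx: "\<not> lprf I l x (worst I l Z)" and u: "u \<in> Z"
  shows "lprf I l u x"
proof -
  have w: "worst I l Z \<in> Z \<and> (\<forall>u\<in>Z. u \<noteq> worst I l Z \<longrightarrow> lprf I l u (worst I l Z))"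
    using worst_prop[OF R fin _ sub] u by blast
  have "worst I l Z \<noteq> x" using w x by auto
  then have wx: "lprf I l (worst I l Z) x" using so_total[OF R, of x "worst I l Z"] w sub x nx by blast
  show ?thesis
  proof (cases "u = worst I l Z")
    case True then show ?thesis using wx by simp
  next
    case False then show ?thesis using w u wx so_trans[OF R] by blast
  qed
qed

lemma acc_facts:
  assumes "valid_spa I" "acceptable I s p"
  shows "s \<in> studs I" "p \<in> projs I" "offerer I p \<in> lecs I" "s \<in> lec_list I (offerer I p)"
    "p \<in> accp I s"
proof -
  have a: "s \<in> studs I" "p \<in> accp I s" "s \<in> lec_list I (offerer I p)" using assms(2) unfolding acceptable_def by auto
  have "accp I s \<subseteq> projs I" using assms(1) a(1) unfolding valid_spa_def by blast
  then have b: "p \<in> projs I" using a by blast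
  then have "offerer I p \<in> lecs I" using assms(1) unfolding valid_spa_def by blast
  then show "s \<in> studs I" "p \<in> projs I" "offerer I p \<in> lecs I" "s \<in> lec_list I (offerer I p)"
    "p \<in> accp I s" using a b by auto
qed

lemma lec_so: "valid_spa I \<Longrightarrow> l \<in> lecs I \<Longrightarrow> strict_order_on (lec_list I l) (lprf I l)"
  unfolding valid_spa_def by blast

lemma stud_so: "valid_spa I \<Longrightarrow> s \<in> studs I \<Longrightarrow> strict_order_on (accp I s) (sprf I s)"
  unfolding valid_spa_def by blast

lemma mat_acc: "is_matching I N \<Longrightarrow> (s,p) \<in> N \<Longrightarrow> acceptable I s p"
  unfolding is_matching_def by blast

lemma mat_uniq: "is_matching I N \<Longrightarrow> (s,p) \<in> N \<Longrightarrow> (s,q) \<in> N \<Longrightarrow> p = q"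
  unfolding is_matching_def by blast

lemma mat_pcap: "is_matching I N \<Longrightarrow> p \<in> projs I \<Longrightarrow> card (Mp N p) \<le> pcap I p"
  unfolding is_matching_def by blast

lemma mat_lcap: "is_matching I N \<Longrightarrow> l \<in> lecs I \<Longrightarrow> card (Ml I N l) \<le> lcap I l"
  unfolding is_matching_def by blast

lemma Mp_sub:
  assumes "valid_spa I" "is_matching I N"
  shows "Mp N p \<subseteq> lec_list I (offerer I p)" "Mp N p \<subseteq> studs I" "finite (Mp N p)"
proof -
  show a: "Mp N p \<subseteq> lec_list I (offerer I p)" "Mp N p \<subseteq> studs I"
    using assms mat_acc acc_facts unfolding Mp_def by fastforce+
  show "finite (Mp N p)" using a(2) assms(1) finite_subset unfolding valid_spa_def by blast
qed

lemma Ml_sub: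
  assumes "valid_spa I" "is_matching I N"
  shows "Ml I N l \<subseteq> lec_list I l" "Ml I N l \<subseteq> studs I" "finite (Ml I N l)"
proof -
  show a: "Ml I N l \<subseteq> lec_list I l" "Ml I N l \<subseteq> studs I"
    using assms mat_acc acc_facts unfolding Ml_def by fastforce+
  show "finite (Ml I N l)" using a(2) assms(1) finite_subset unfolding valid_spa_def by blast
qed

lemma offered_fin: "valid_spa I \<Longrightarrow> finite (offered I l)"
  unfolding valid_spa_def offered_def by auto

lemma Ml_UN:
  assumes "valid_spa I" "\<And>s p. (s,p) \<in> N \<Longrightarrow> p \<in> projs I"
  shows "Ml I N l = (\<Union>q\<in>offered I l. Mp N q)"
  using assms unfolding Ml_def Mp_def offered_def by blast

lemma card_Ml:
  assumes V: "valid_spa I" and N: "is_matching I N"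
  shows "card (Ml I N l) = (\<Sum>q\<in>offered I l. card (Mp N q))"
proof -
  have pr: "\<And>s p. (s,p) \<in> N \<Longrightarrow> p \<in> projs I" using acc_facts[OF V] mat_acc[OF N] by blast
  have "card (\<Union>q\<in>offered I l. Mp N q) = (\<Sum>q\<in>offered I l. card (Mp N q))"
  proof (rule card_UN_disjoint)
    show "finite (offered I l)" using offered_fin[OF V] .
    show "\<forall>i\<in>offered I l. finite (Mp N i)" using Mp_sub(3)[OF V N] by blast
    show "\<forall>i\<in>offered I l. \<forall>j\<in>offered I l. i \<noteq> j \<longrightarrow> Mp N i \<inter> Mp N j = {}"
      using mat_uniq[OF N] unfolding Mp_def by blast
  qed
  then show ?thesis using Ml_UN[OF V pr] by simp
qed

lemma not_blocks: "stable I N \<Longrightarrow> \<not> blocks I N s p"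
  unfolding stable_def by blast

locale two =
  fixes I :: "('s,'p,'l) spa" and M M' :: "('s \<times> 'p) set"
  assumes V: "valid_spa I" and S: "stable I M" and S': "stable I M'"
begin

lemma MM: "is_matching I M" using S unfolding stable_def by blast
lemma MM': "is_matching I M'" using S' unfolding stable_def by blast

definition Xs :: "'s set" where
  "Xs = {s. \<exists>q. (s,q) \<in> M \<and> (s,q) \<notin> M' \<and> (\<forall>r. (s,r) \<in> M' \<longrightarrow> sprf I s q r)}"

definition L :: "'p \<Rightarrow> 's set" where "L q = Mp M q - Mp M' q"
definition G :: "'p \<Rightarrow> 's set" where "G q = Mp M' q - Mp M q"
definition A :: "'p \<Rightarrow> 's set" where "A q = Mp M q \<inter> Mp M' q"

lemma fins: "finite (A q)" "finite (L q)" "finite (G q)"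
  "finite (L q \<inter> Xs)" "finite (L q - Xs)" "finite (G q \<inter> Xs)" "finite (G q - Xs)"
  using Mp_sub(3)[OF V MM] Mp_sub(3)[OF V MM'] unfolding A_def L_def G_def by auto

lemma card_M: "card (Mp M q) = card (A q) + card (L q \<inter> Xs) + card (L q - Xs)"
proof -
  have "Mp M q = A q \<union> (L q \<inter> Xs) \<union> (L q - Xs)" unfolding A_def L_def by blast
  then have "card (Mp M q) = card (A q \<union> (L q \<inter> Xs) \<union> (L q - Xs))" by simp
  also have "\<dots> = card (A q \<union> (L q \<inter> Xs)) + card (L q - Xs)"
    by (rule card_Un_disjoint) (use fins in \<open>auto simp: A_def L_def\<close>)
  also have "card (A q \<union> (L q \<inter> Xs)) = card (A q) + card (L q \<inter> Xs)"
    by (rule card_Un_disjoint) (use fins in \<open>auto simp: A_def L_def\<close>)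
  finally show ?thesis .
qed

lemma card_M': "card (Mp M' q) = card (A q) + card (G q \<inter> Xs) + card (G q - Xs)"
proof -
  have "Mp M' q = A q \<union> (G q \<inter> Xs) \<union> (G q - Xs)" unfolding A_def G_def by blast
  then have "card (Mp M' q) = card (A q \<union> (G q \<inter> Xs) \<union> (G q - Xs))" by simp
  also have "\<dots> = card (A q \<union> (G q \<inter> Xs)) + card (G q - Xs)"
    by (rule card_Un_disjoint) (use fins in \<open>auto simp: A_def G_def\<close>)
  also have "card (A q \<union> (G q \<inter> Xs)) = card (A q) + card (G q \<inter> Xs)"
    by (rule card_Un_disjoint) (use fins in \<open>auto simp: A_def G_def\<close>)
  finally show ?thesis .
qed

lemma X_fact:
  assumes sX: "s \<in> Xs" and sq: "(s,q) \<in> M"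
  shows "(s,q) \<notin> M' \<and> ((card (Mp M' q) = pcap I q \<and> (\<forall>v\<in>Mp M' q. lprf I (offerer I q) v s)) \<or>
     (card (Mp M' q) < pcap I q \<and> card (Ml I M' (offerer I q)) = lcap I (offerer I q) \<and>
      (\<forall>v\<in>Ml I M' (offerer I q). lprf I (offerer I q) v s)))"
proof -
  obtain q' where q': "(s,q') \<in> M" "(s,q') \<notin> M'" "\<forall>r. (s,r) \<in> M' \<longrightarrow> sprf I s q' r"
    using sX unfolding Xs_def by blast
  have "q' = q" using mat_uniq[OF MM q'(1) sq] .
  with q' have nq: "(s,q) \<notin> M'" and pref: "\<forall>r. (s,r) \<in> M' \<longrightarrow> sprf I s q r" by auto
  have acc: "acceptable I s q" using mat_acc[OF MM sq] .
  note af = acc_facts[OF V acc]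
  have R: "strict_order_on (lec_list I (offerer I q)) (lprf I (offerer I q))" using lec_so[OF V af(3)] .
  have sc: "(\<forall>r. (s,r) \<notin> M') \<or> (\<exists>r. (s,r) \<in> M' \<and> sprf I s q r)" using pref by blast
  have nb: "\<not> blocks I M' s q" using not_blocks[OF S'] .
  hence nb': "\<not> ((card (Mp M' q) < pcap I q \<and> card (Ml I M' (offerer I q)) < lcap I (offerer I q)) \<or>
        (card (Mp M' q) < pcap I q \<and> card (Ml I M' (offerer I q)) = lcap I (offerer I q) \<and> s \<in> Ml I M' (offerer I q)) \<or>
        (card (Mp M' q) < pcap I q \<and> card (Ml I M' (offerer I q)) = lcap I (offerer I q) \<and>
           lprf I (offerer I q) s (worst I (offerer I q) (Ml I M' (offerer I q)))) \<or>
        (card (Mp M' q) = pcap I q \<and> lprf I (offerer I q) s (worst I (offerer I q) (Mp M' q))))"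
    using acc nq sc unfolding blocks_def Let_def by blast
  have c1: "card (Mp M' q) \<le> pcap I q" using mat_pcap[OF MM' af(2)] .
  have c2: "card (Ml I M' (offerer I q)) \<le> lcap I (offerer I q)" using mat_lcap[OF MM' af(3)] .
  show ?thesis
  proof (cases "card (Mp M' q) = pcap I q")
    case True
    have sn: "s \<notin> Mp M' q" using nq unfolding Mp_def by blast
    have nx: "\<not> lprf I (offerer I q) s (worst I (offerer I q) (Mp M' q))" using nb' True by blast
    have "\<forall>v\<in>Mp M' q. lprf I (offerer I q) v s"
      using worst_below[OF R Mp_sub(3)[OF V MM'] Mp_sub(1)[OF V MM'] af(4) sn nx] by blast
    then show ?thesis using True nq by simp
  next
    case False
    hence lt: "card (Mp M' q) < pcap I q" using c1 by simp
    hence eq: "card (Ml I M' (offerer I q)) = lcap I (offerer I q)" using nb' c2 by auto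
    have sn: "s \<notin> Ml I M' (offerer I q)" using nb' lt eq by blast
    have nx: "\<not> lprf I (offerer I q) s (worst I (offerer I q) (Ml I M' (offerer I q)))" using nb' lt eq by blast
    have "\<forall>v\<in>Ml I M' (offerer I q). lprf I (offerer I q) v s"
      using worst_below[OF R Ml_sub(3)[OF V MM'] Ml_sub(1)[OF V MM'] af(4) sn nx] by blast
    then show ?thesis using lt eq nq by simp
  qed
qed

lemma nonX_fact:
  assumes tq: "(t,q) \<in> M'" and tn: "(t,q) \<notin> M" and tX: "t \<notin> Xs"
  shows "\<not> ((card (Mp M q) < pcap I q \<and> card (Ml I M (offerer I q)) < lcap I (offerer I q)) \<or>
        (card (Mp M q) < pcap I q \<and> card (Ml I M (offerer I q)) = lcap I (offerer I q) \<and> t \<in> Ml I M (offerer I q)) \<or>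
        (card (Mp M q) < pcap I q \<and> card (Ml I M (offerer I q)) = lcap I (offerer I q) \<and>
           lprf I (offerer I q) t (worst I (offerer I q) (Ml I M (offerer I q)))) \<or>
        (card (Mp M q) = pcap I q \<and> lprf I (offerer I q) t (worst I (offerer I q) (Mp M q))))"
proof -
  have acc: "acceptable I t q" using mat_acc[OF MM' tq] .
  note af = acc_facts[OF V acc]
  have sc: "(\<forall>r. (t,r) \<notin> M) \<or> (\<exists>r. (t,r) \<in> M \<and> sprf I t q r)"
  proof (cases "\<exists>r. (t,r) \<in> M")
    case False then show ?thesis by blast
  next
    case True
    then obtain r where tr: "(t,r) \<in> M" by blast
    have rq: "r \<noteq> q" using tr tn by blast
    have rn: "(t,r) \<notin> M'" using mat_uniq[OF MM' tq] rq by blast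
    have nsp: "\<not> sprf I t r q"
    proof
      assume "sprf I t r q"
      then have "\<forall>r'. (t,r') \<in> M' \<longrightarrow> sprf I t r r'" using mat_uniq[OF MM' tq] by blast
      then have "t \<in> Xs" using tr rn unfolding Xs_def by blast
      then show False using tX by blast
    qed
    have "r \<in> accp I t" using acc_facts(5)[OF V mat_acc[OF MM tr]] .
    then have "sprf I t q r" using so_total[OF stud_so[OF V af(1)] af(5)] rq nsp by blast
    then show ?thesis using tr by blast
  qed
  have "\<not> blocks I M t q" using not_blocks[OF S] .
  then show ?thesis using acc tn sc unfolding blocks_def Let_def by blast
qed

lemma join_sub: "Mp (join I M M') q \<subseteq> A q \<union> (L q - Xs) \<union> (G q \<inter> Xs)"
proof
  fix s assume "s \<in> Mp (join I M M') q"
  then have j: "(s,q) \<in> join I M M'" unfolding Mp_def by blast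
  consider (both) "(s,q) \<in> M" "(s,q) \<in> M'"
    | (m) r where "(s,q) \<in> M" "(s,r) \<in> M'" "sprf I s r q"
    | (m') r where "(s,q) \<in> M'" "(s,r) \<in> M" "sprf I s r q"
    using j unfolding join_def by blast
  then show "s \<in> A q \<union> (L q - Xs) \<union> (G q \<inter> Xs)"
  proof cases
    case both then show ?thesis unfolding A_def Mp_def by blast
  next
    case m
    note so = stud_so[OF V acc_facts(1)[OF V mat_acc[OF MM m(1)]]]
    have rq: "r \<noteq> q" using m(3) so_irrefl[OF so] by blast
    have nq: "(s,q) \<notin> M'" using mat_uniq[OF MM' m(2)] rq by blast
    have "s \<notin> Xs"
    proof
      assume "s \<in> Xs"
      then obtain q' where q': "(s,q') \<in> M" "\<forall>r. (s,r) \<in> M' \<longrightarrow> sprf I s q' r" unfolding Xs_def by blast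
      have "q' = q" using mat_uniq[OF MM q'(1) m(1)] .
      then have "sprf I s q r" using q'(2) m(2) by blast
      then have "sprf I s q q" using so_trans[OF so _ m(3)] by blast
      then show False using so_irrefl[OF so] by blast
    qed
    then show ?thesis using m(1) nq unfolding L_def Mp_def by blast
  next
    case m'
    note so = stud_so[OF V acc_facts(1)[OF V mat_acc[OF MM m'(2)]]]
    have rq: "r \<noteq> q" using m'(3) so_irrefl[OF so] by blast
    have nq: "(s,q) \<notin> M" using mat_uniq[OF MM m'(2)] rq by blast
    have rn: "(s,r) \<notin> M'" using mat_uniq[OF MM' m'(1)] rq by blast
    have "\<forall>r'. (s,r') \<in> M' \<longrightarrow> sprf I s r r'" using mat_uniq[OF MM' m'(1)] m'(3) by blast
    then have "s \<in> Xs" using m'(2) rn unfolding Xs_def by blast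
    then show ?thesis using m'(1) nq unfolding G_def Mp_def by blast
  qed
qed

lemma card_join: "card (Mp (join I M M') q) \<le> card (A q) + card (L q - Xs) + card (G q \<inter> Xs)"
proof -
  have "card (Mp (join I M M') q) \<le> card (A q \<union> (L q - Xs) \<union> (G q \<inter> Xs))"
    by (rule card_mono) (use fins join_sub in auto)
  also have "\<dots> \<le> card (A q \<union> (L q - Xs)) + card (G q \<inter> Xs)" by (rule card_Un_le)
  also have "card (A q \<union> (L q - Xs)) \<le> card (A q) + card (L q - Xs)" by (rule card_Un_le)
  finally show ?thesis by simp
qed

lemma Xs_studs: "Xs \<subseteq> studs I"
  unfolding Xs_def using acc_facts(1)[OF V mat_acc[OF MM]] by blast

lemma fin_Xs: "finite Xs"
  using Xs_studs V finite_subset unfolding valid_spa_def by blast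

lemma fin_projs: "finite (projs I)" using V unfolding valid_spa_def by blast
lemma fin_lecs: "finite (lecs I)" using V unfolding valid_spa_def by blast

lemma nonb_G:
  assumes q: "q \<in> projs I" and s: "s \<in> L q \<inter> Xs" and full: "card (Mp M' q) = pcap I q"
  shows "G q \<subseteq> Xs"
proof
  fix t assume tG: "t \<in> G q"
  show "t \<in> Xs"
  proof (rule ccontr)
    assume tX: "t \<notin> Xs"
    have tq: "(t,q) \<in> M'" "(t,q) \<notin> M" using tG unfolding G_def Mp_def by auto
    have sq: "(s,q) \<in> M" using s unfolding L_def Mp_def by auto
    have sX: "s \<in> Xs" using s by blast
    have lq: "offerer I q \<in> lecs I" using V q unfolding valid_spa_def by blast
    note R = lec_so[OF V lq]
    have "\<forall>v\<in>Mp M' q. lprf I (offerer I q) v s" using X_fact[OF sX sq] full by auto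
    then have ts: "lprf I (offerer I q) t s" using tq unfolding Mp_def by blast
    have sM: "s \<in> Mp M q" using sq unfolding Mp_def by blast
    have sMl: "s \<in> Ml I M (offerer I q)" using sq unfolding Ml_def by blast
    have w1: "lprf I (offerer I q) t (worst I (offerer I q) (Mp M q))"
      using worst_above[OF R Mp_sub(3)[OF V MM] Mp_sub(1)[OF V MM] sM ts] .
    have w2: "lprf I (offerer I q) t (worst I (offerer I q) (Ml I M (offerer I q)))"
      using worst_above[OF R Ml_sub(3)[OF V MM] Ml_sub(1)[OF V MM] sMl ts] .
    have c1: "card (Mp M q) < pcap I q \<or> card (Mp M q) = pcap I q" using mat_pcap[OF MM q] by linarith
    have c2: "card (Ml I M (offerer I q)) < lcap I (offerer I q) \<or> card (Ml I M (offerer I q)) = lcap I (offerer I q)"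
      using mat_lcap[OF MM lq] by linarith
    show False using nonX_fact[OF tq tX] w1 w2 c1 c2 by blast
  qed
qed

lemma nonb_q:
  assumes q: "q \<in> projs I" and nb: "\<not> (card (Mp M' q) < pcap I q \<and> L q \<inter> Xs \<noteq> {})"
  shows "card (L q \<inter> Xs) \<le> card (G q \<inter> Xs)"
proof (cases "L q \<inter> Xs = {}")
  case True then show ?thesis by simp
next
  case False
  then have full: "card (Mp M' q) = pcap I q" using nb mat_pcap[OF MM' q] by linarith
  obtain s where "s \<in> L q \<inter> Xs" using False by blast
  then have "G q \<subseteq> Xs" using nonb_G[OF q _ full] by blast
  then have "G q - Xs = {}" by blast
  then have "card (G q - Xs) = 0" by (metis card.empty)
  moreover have "card (Mp M q) \<le> card (Mp M' q)" using mat_pcap[OF MM q] full by simp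
  ultimately show ?thesis using card_M[of q] card_M'[of q] by linarith
qed

lemma b_lec:
  assumes q0: "q0 \<in> projs I" and s0: "s0 \<in> L q0 \<inter> Xs" and lt0: "card (Mp M' q0) < pcap I q0"
    and q: "q \<in> projs I" and off: "offerer I q = offerer I q0"
  shows "card (Ml I M' (offerer I q0)) = lcap I (offerer I q0) \<and> card (G q - Xs) \<le> card (L q - Xs)"
proof -
  have s0q: "(s0,q0) \<in> M" using s0 unfolding L_def Mp_def by auto
  have s0X: "s0 \<in> Xs" using s0 by blast
  have xf: "card (Ml I M' (offerer I q0)) = lcap I (offerer I q0)"
    "\<forall>v\<in>Ml I M' (offerer I q0). lprf I (offerer I q0) v s0"
    using X_fact[OF s0X s0q] lt0 by auto
  have "card (G q - Xs) \<le> card (L q - Xs)"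
  proof (cases "G q - Xs = {}")
    case True
    then have "card (G q - Xs) = 0" by (metis card.empty)
    then show ?thesis by simp
  next
    case False
    then obtain t where tG: "t \<in> G q" and tX: "t \<notin> Xs" by blast
    have tq: "(t,q) \<in> M'" "(t,q) \<notin> M" using tG unfolding G_def Mp_def by auto
    have tMl': "t \<in> Ml I M' (offerer I q)" using tq unfolding Ml_def by blast
    have ts: "lprf I (offerer I q) t s0" using xf(2) tMl' off by simp
    have s0Ml: "s0 \<in> Ml I M (offerer I q)" unfolding Ml_def using s0q off by force
    have lq: "offerer I q \<in> lecs I" using V q unfolding valid_spa_def by blast
    note R = lec_so[OF V lq]
    have w2: "lprf I (offerer I q) t (worst I (offerer I q) (Ml I M (offerer I q)))"
      using worst_above[OF R Ml_sub(3)[OF V MM] Ml_sub(1)[OF V MM] s0Ml ts] .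
    note nf = nonX_fact[OF tq tX]
    have c1: "card (Mp M q) \<le> pcap I q" using mat_pcap[OF MM q] .
    have c2: "card (Ml I M (offerer I q)) < lcap I (offerer I q) \<or> card (Ml I M (offerer I q)) = lcap I (offerer I q)"
      using mat_lcap[OF MM lq] by linarith
    have full: "card (Mp M q) = pcap I q"
    proof (rule ccontr)
      assume "card (Mp M q) \<noteq> pcap I q"
      then have "card (Mp M q) < pcap I q" using c1 by linarith
      then show False using nf c2 w2 by blast
    qed
    have nx: "\<not> lprf I (offerer I q) t (worst I (offerer I q) (Mp M q))" using nf full by blast
    have tll: "t \<in> lec_list I (offerer I q)" using acc_facts(4)[OF V mat_acc[OF MM' tq(1)]] .
    have tnM: "t \<notin> Mp M q" using tq unfolding Mp_def by blast
    have below: "\<forall>u\<in>Mp M q. lprf I (offerer I q) u t"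
      using worst_below[OF R Mp_sub(3)[OF V MM] Mp_sub(1)[OF V MM] tll tnM nx] by blast
    have noX: "L q \<inter> Xs = {}"
    proof (rule ccontr)
      assume "L q \<inter> Xs \<noteq> {}"
      then obtain u where u: "u \<in> L q" "u \<in> Xs" by blast
      have uq: "(u,q) \<in> M" using u unfolding L_def Mp_def by auto
      have tM': "t \<in> Mp M' q" using tq unfolding Mp_def by blast
      have "lprf I (offerer I q) t u" using X_fact[OF u(2) uq] tM' tMl' by blast
      moreover have "lprf I (offerer I q) u t" using below uq unfolding Mp_def by blast
      ultimately have "lprf I (offerer I q) u u" using so_trans[OF R] by blast
      then show False using so_irrefl[OF R] by blast
    qed
    have "card (Mp M' q) \<le> card (Mp M q)" using mat_pcap[OF MM' q] full by simp
    then show ?thesis using card_M[of q] card_M'[of q] noX by simp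
  qed
  then show ?thesis using xf(1) by simp
qed

lemma sum_glob: "(\<Sum>q\<in>projs I. card (G q \<inter> Xs)) \<le> (\<Sum>q\<in>projs I. card (L q \<inter> Xs))"
proof -
  have e1: "card (\<Union>q\<in>projs I. L q \<inter> Xs) = (\<Sum>q\<in>projs I. card (L q \<inter> Xs))"
  proof (rule card_UN_disjoint)
    show "finite (projs I)" using fin_projs .
    show "\<forall>i\<in>projs I. finite (L i \<inter> Xs)" using fins by blast
    show "\<forall>i\<in>projs I. \<forall>j\<in>projs I. i \<noteq> j \<longrightarrow> (L i \<inter> Xs) \<inter> (L j \<inter> Xs) = {}"
      using mat_uniq[OF MM] unfolding L_def Mp_def by blast
  qed
  have e2: "card (\<Union>q\<in>projs I. G q \<inter> Xs) = (\<Sum>q\<in>projs I. card (G q \<inter> Xs))"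
  proof (rule card_UN_disjoint)
    show "finite (projs I)" using fin_projs .
    show "\<forall>i\<in>projs I. finite (G i \<inter> Xs)" using fins by blast
    show "\<forall>i\<in>projs I. \<forall>j\<in>projs I. i \<noteq> j \<longrightarrow> (G i \<inter> Xs) \<inter> (G j \<inter> Xs) = {}"
      using mat_uniq[OF MM'] unfolding G_def Mp_def by blast
  qed
  have u1: "(\<Union>q\<in>projs I. L q \<inter> Xs) = Xs"
  proof
    show "(\<Union>q\<in>projs I. L q \<inter> Xs) \<subseteq> Xs" by blast
    show "Xs \<subseteq> (\<Union>q\<in>projs I. L q \<inter> Xs)"
    proof
      fix s assume sX: "s \<in> Xs"
      then obtain q where q: "(s,q) \<in> M" "(s,q) \<notin> M'" unfolding Xs_def by blast
      have "q \<in> projs I" using acc_facts(2)[OF V mat_acc[OF MM q(1)]] .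
      moreover have "s \<in> L q" using q unfolding L_def Mp_def by blast
      ultimately show "s \<in> (\<Union>q\<in>projs I. L q \<inter> Xs)" using sX by blast
    qed
  qed
  have "card (\<Union>q\<in>projs I. G q \<inter> Xs) \<le> card Xs"
    by (rule card_mono[OF fin_Xs]) blast
  then show ?thesis using e1 e2 u1 by simp
qed

lemma group_sum: "(\<Sum>l\<in>lecs I. \<Sum>q\<in>offered I l. f q) = (\<Sum>q\<in>projs I. f q)"
  unfolding offered_def
  by (rule sum.group[OF fin_projs fin_lecs]) (use V in \<open>auto simp: valid_spa_def\<close>)

lemma b_sum:
  assumes l: "l \<in> lecs I" and b: "\<exists>q0\<in>offered I l. card (Mp M' q0) < pcap I q0 \<and> L q0 \<inter> Xs \<noteq> {}"
  shows "(\<forall>q\<in>offered I l. card (G q - Xs) \<le> card (L q - Xs)) \<and>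
    (\<Sum>q\<in>offered I l. card (A q) + card (L q \<inter> Xs) + card (L q - Xs)) \<le>
    (\<Sum>q\<in>offered I l. card (A q) + card (G q \<inter> Xs) + card (G q - Xs))"
proof -
  obtain q0 s0 where q0: "q0 \<in> offered I l" "card (Mp M' q0) < pcap I q0" "s0 \<in> L q0 \<inter> Xs"
    using b by blast
  have q0p: "q0 \<in> projs I" "offerer I q0 = l" using q0(1) unfolding offered_def by auto
  have hk: "\<forall>q\<in>offered I l. card (G q - Xs) \<le> card (L q - Xs)"
  proof
    fix q assume "q \<in> offered I l"
    then have "q \<in> projs I" "offerer I q = offerer I q0" using q0p unfolding offered_def by auto
    then show "card (G q - Xs) \<le> card (L q - Xs)" using b_lec[OF q0p(1) q0(3) q0(2)] by blast
  qed
  have eq: "card (Ml I M' l) = lcap I l"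
    using b_lec[OF q0p(1) q0(3) q0(2) q0p(1) refl] q0p(2) by simp
  have "card (Ml I M l) \<le> card (Ml I M' l)" using mat_lcap[OF MM l] eq by simp
  then have "(\<Sum>q\<in>offered I l. card (Mp M q)) \<le> (\<Sum>q\<in>offered I l. card (Mp M' q))"
    using card_Ml[OF V MM] card_Ml[OF V MM'] by simp
  then show ?thesis using hk card_M card_M' by simp
qed

lemma lec_le:
  assumes l: "l \<in> lecs I"
  shows "(\<Sum>q\<in>offered I l. card (L q \<inter> Xs)) \<le> (\<Sum>q\<in>offered I l. card (G q \<inter> Xs))"
proof (cases "\<exists>q0\<in>offered I l. card (Mp M' q0) < pcap I q0 \<and> L q0 \<inter> Xs \<noteq> {}")
  case True
  note bs = b_sum[OF l True]
  have "(\<Sum>q\<in>offered I l. card (G q - Xs)) \<le> (\<Sum>q\<in>offered I l. card (L q - Xs))"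
    using bs by (intro sum_mono) blast
  then show ?thesis using bs(1) conjunct2[OF bs] by (simp add: sum.distrib)
next
  case False
  show ?thesis
  proof (rule sum_mono)
    fix q assume q: "q \<in> offered I l"
    then have "q \<in> projs I" unfolding offered_def by auto
    then show "card (L q \<inter> Xs) \<le> card (G q \<inter> Xs)" using nonb_q False q by blast
  qed
qed

lemma lec_eq:
  assumes l: "l \<in> lecs I"
  shows "(\<Sum>q\<in>offered I l. card (L q \<inter> Xs)) = (\<Sum>q\<in>offered I l. card (G q \<inter> Xs))"
proof -
  have a: "(\<Sum>l\<in>lecs I. \<Sum>q\<in>offered I l. card (G q \<inter> Xs)) \<le> (\<Sum>l\<in>lecs I. \<Sum>q\<in>offered I l. card (L q \<inter> Xs))"
    using sum_glob group_sum[of "\<lambda>q. card (G q \<inter> Xs)"] group_sum[of "\<lambda>q. card (L q \<inter> Xs)"] by simp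
  have b: "(\<Sum>l\<in>lecs I. \<Sum>q\<in>offered I l. card (L q \<inter> Xs)) \<le> (\<Sum>l\<in>lecs I. \<Sum>q\<in>offered I l. card (G q \<inter> Xs))"
    by (rule sum_mono) (rule lec_le)
  have "(\<Sum>l\<in>lecs I. \<Sum>q\<in>offered I l. card (L q \<inter> Xs)) = (\<Sum>l\<in>lecs I. \<Sum>q\<in>offered I l. card (G q \<inter> Xs))"
    using a b by simp
  then show ?thesis
    using sum_mono_inv[where f="\<lambda>l. \<Sum>q\<in>offered I l. card (L q \<inter> Xs)"
        and g="\<lambda>l. \<Sum>q\<in>offered I l. card (G q \<inter> Xs)", OF _ lec_le l fin_lecs] by simp
qed

lemma lec_final:
  assumes l: "l \<in> lecs I"
  shows "(\<forall>q\<in>offered I l. card (Mp (join I M M') q) \<le> card (Mp M q)) \<or>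
         (\<forall>q\<in>offered I l. card (Mp (join I M M') q) \<le> card (Mp M' q))"
proof (cases "\<exists>q0\<in>offered I l. card (Mp M' q0) < pcap I q0 \<and> L q0 \<inter> Xs \<noteq> {}")
  case True
  note bs = b_sum[OF l True]
  have "(\<Sum>q\<in>offered I l. card (L q - Xs)) \<le> (\<Sum>q\<in>offered I l. card (G q - Xs))"
    using conjunct2[OF bs] lec_eq[OF l] by (simp add: sum.distrib)
  moreover have "(\<Sum>q\<in>offered I l. card (G q - Xs)) \<le> (\<Sum>q\<in>offered I l. card (L q - Xs))"
    using bs by (intro sum_mono) blast
  ultimately have se: "(\<Sum>q\<in>offered I l. card (G q - Xs)) = (\<Sum>q\<in>offered I l. card (L q - Xs))"
    by simp
  have "\<forall>q\<in>offered I l. card (Mp (join I M M') q) \<le> card (Mp M' q)"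
  proof
    fix q assume q: "q \<in> offered I l"
    have "card (G q - Xs) = card (L q - Xs)"
      using sum_mono_inv[OF se _ q offered_fin[OF V]] bs by blast
    then show "card (Mp (join I M M') q) \<le> card (Mp M' q)" using card_join[of q] card_M'[of q] by simp
  qed
  then show ?thesis by blast
next
  case False
  have le: "card (L q \<inter> Xs) \<le> card (G q \<inter> Xs)" if q: "q \<in> offered I l" for q
  proof -
    have "q \<in> projs I" using q unfolding offered_def by auto
    then show ?thesis using nonb_q False q by blast
  qed
  have "\<forall>q\<in>offered I l. card (Mp (join I M M') q) \<le> card (Mp M q)"
  proof
    fix q assume q: "q \<in> offered I l"
    have "card (L q \<inter> Xs) = card (G q \<inter> Xs)"
      using sum_mono_inv[OF lec_eq[OF l] le q offered_fin[OF V]] by blast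
    then show "card (Mp (join I M M') q) \<le> card (Mp M q)" using card_join[of q] card_M[of q] by simp
  qed
  then show ?thesis by blast
qed

lemma join_uniq: "(s,p) \<in> join I M M' \<Longrightarrow> (s,q) \<in> join I M M' \<Longrightarrow> p = q"
proof -
  assume jp: "(s,p) \<in> join I M M'" and jq: "(s,q) \<in> join I M M'"
  have "(s,p) \<in> M \<or> (s,p) \<in> M'" using jp unfolding join_def by blast
  then have "s \<in> studs I" using acc_facts(1)[OF V mat_acc[OF MM]] acc_facts(1)[OF V mat_acc[OF MM']] by blast
  note so = stud_so[OF V this]
  have asym: "\<And>a b. sprf I s a b \<Longrightarrow> sprf I s b a \<Longrightarrow> False"
    using so_trans[OF so] so_irrefl[OF so] by blast
  have u1: "\<And>a b. (s,a) \<in> M \<Longrightarrow> (s,b) \<in> M \<Longrightarrow> a = b" using mat_uniq[OF MM] by blast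
  have u2: "\<And>a b. (s,a) \<in> M' \<Longrightarrow> (s,b) \<in> M' \<Longrightarrow> a = b" using mat_uniq[OF MM'] by blast
  show "p = q" using jp jq asym u1 u2 unfolding join_def by blast
qed

end

theorem lemma11:
  assumes "valid_spa I" and "stable I M" and "stable I M'"
  shows "is_matching I (join I M M')"
proof -
  interpret two I M M' using assms by unfold_locales
  let ?J = "join I M M'"
  have sub: "?J \<subseteq> M \<union> M'" unfolding join_def by blast
  have acc: "\<forall>(s,p)\<in>?J. acceptable I s p"
    using sub mat_acc[OF MM] mat_acc[OF MM'] by blast
  have pr: "\<And>s p. (s,p) \<in> ?J \<Longrightarrow> p \<in> projs I"
    using acc acc_facts(2)[OF V] by blast
  have pc: "\<forall>p\<in>projs I. card (Mp ?J p) \<le> pcap I p"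
  proof
    fix p assume p: "p \<in> projs I"
    have l: "offerer I p \<in> lecs I" using V p unfolding valid_spa_def by blast
    have po: "p \<in> offered I (offerer I p)" using p unfolding offered_def by simp
    show "card (Mp ?J p) \<le> pcap I p"
      using lec_final[OF l] po mat_pcap[OF MM p] mat_pcap[OF MM' p] by fastforce
  qed
  have lc: "\<forall>l\<in>lecs I. card (Ml I ?J l) \<le> lcap I l"
  proof
    fix l assume l: "l \<in> lecs I"
    have "card (Ml I ?J l) \<le> (\<Sum>q\<in>offered I l. card (Mp ?J q))"
      using Ml_UN[OF V pr, where l=l] card_UN_le[OF offered_fin[OF V, where l=l], where A="\<lambda>q. Mp ?J q"] by simp
    moreover have "(\<Sum>q\<in>offered I l. card (Mp ?J q)) \<le> (\<Sum>q\<in>offered I l. card (Mp M q)) \<or>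
       (\<Sum>q\<in>offered I l. card (Mp ?J q)) \<le> (\<Sum>q\<in>offered I l. card (Mp M' q))"
      using lec_final[OF l] by (metis (no_types, lifting) sum_mono)
    ultimately show "card (Ml I ?J l) \<le> lcap I l"
      using card_Ml[OF V MM, of l] card_Ml[OF V MM', of l] mat_lcap[OF MM l] mat_lcap[OF MM' l]
      by linarith
  qed
  show ?thesis unfolding is_matching_def using acc join_uniq pc lc by blast
qed

end
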